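(* Let $a,b$ be positive integers, $h(j)=aj^2+b$ for $j\ge0$, $h(j)=0$ for $j<0$, and $\alpha=a/b$. Then $$\operatorname{hdepth}(h)=\begin{cases}\lfloor\alpha\rfloor+1,&\alpha\in(0,7),\\ 8,&\alpha\in[7,\tfrac{22}{3}],\\ 7,&\alpha\in(\tfrac{22}{3},8],\\ 6,&\alpha\in(8,11],\\ 5,&\alpha\in(11,\infty).\end{cases}$$
   Context: For a nonzero function $h:\mathbb Z\to\mathbb Z_{\ge 0}$ with $h(j)=0$ for all sufficiently negative $j$, and integers $k\le d$, set $\beta_k^d(h)=\sum_{j\le k}(-1)^{k-j}\binom{d-j}{k-j}h(j)$, and $\operatorname{hdepth}(h)=\max\{d\in\mathbb Z:\ \beta_k^d(h)\ge 0\text{ for all integers }k\le d\}$. *)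

theory Defs
  imports Complex_Main
begin

text \<open>Since h vanishes for sufficiently negative j, the sum is taken over the finite
  set of j <= k with h j nonzero (terms with h j = 0 contribute nothing).\<close>
definition beta :: "(int \<Rightarrow> int) \<Rightarrow> int \<Rightarrow> int \<Rightarrow> int" where
  "beta h k d = (\<Sum>j\<in>{j. j \<le> k \<and> h j \<noteq> 0}.
      (-1) ^ nat (k - j) * int (nat (d - j) choose nat (k - j)) * h j)"

definition hdepth :: "(int \<Rightarrow> int) \<Rightarrow> int" where
  "hdepth h = (GREATEST d::int. \<forall>k::int. k \<le> d \<longrightarrow> beta h k d \<ge> 0)"

end

theory Submission
  imports Defs
begin

definition PP :: "nat \<Rightarrow> nat \<Rightarrow> int" where
 "PP k d = (\<Sum>i\<le>k. (-1)^(k-i) * int ((d-i) choose (k-i)) * int i ^ 2)"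
definition QQ :: "nat \<Rightarrow> nat \<Rightarrow> int" where
 "QQ k d = (\<Sum>i\<le>k. (-1)^(k-i) * int ((d-i) choose (k-i)))"

lemma beta_neg:
  assumes hdef: "\<And>j. h j = (if j \<ge> 0 then a * j ^ 2 + b else (0::int))" and "k < 0"
  shows "beta h k d = 0"
proof -
  have "{j. j \<le> k \<and> h j \<noteq> 0} = {}" using assms by auto
  thus ?thesis by (simp add: beta_def)
qed

lemma beta_form:
  assumes a: "a > 0" and b: "b > 0"
    and hdef: "\<And>j. h j = (if j \<ge> 0 then a * j ^ 2 + b else (0::int))"
    and k: "0 \<le> k" and kd: "k \<le> d"
  shows "beta h k d = a * PP (nat k) (nat d) + b * QQ (nat k) (nat d)"
proof -
  have hpos: "h j \<noteq> 0 \<longleftrightarrow> j \<ge> 0" for j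
  proof (cases "j \<ge> 0")
    case True
    have "a * j^2 \<ge> 0" using a by simp
    moreover have "h j = a*j^2+b" using True by (simp add: hdef)
    ultimately show ?thesis using True b by linarith
  next
    case False
    thus ?thesis by (simp add: hdef)
  qed
  have S1: "{j. j \<le> k \<and> h j \<noteq> 0} = {0..k}"
  proof (rule set_eqI)
    fix x show "x \<in> {j. j \<le> k \<and> h j \<noteq> 0} \<longleftrightarrow> x \<in> {0..k}"
      using hpos[of x] by auto
  qed
  have S2: "{0..k} = int ` {..nat k}"
  proof (rule set_eqI, rule iffI)
    fix x :: int assume x: "x \<in> {0..k}"
    hence "x = int (nat x)" "nat x \<in> {..nat k}" by auto
    thus "x \<in> int ` {..nat k}" by blast
  next
    fix x assume "x \<in> int ` {..nat k}"
    thus "x \<in> {0..k}" using k by auto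
  qed
  have S: "{j. j \<le> k \<and> h j \<noteq> 0} = int ` {..nat k}" using S1 S2 by simp
  have "beta h k d = (\<Sum>i\<le>nat k. (-1) ^ nat (k - int i) * int (nat (d - int i) choose nat (k - int i)) * h (int i))"
    unfolding beta_def S by (subst sum.reindex) (auto simp: inj_on_def)
  also have "\<dots> = (\<Sum>i\<le>nat k. a * ((-1)^(nat k-i) * int ((nat d-i) choose (nat k-i)) * int i ^ 2)
       + b * ((-1)^(nat k-i) * int ((nat d-i) choose (nat k-i))))"
  proof (rule sum.cong[OF refl])
    fix i assume "i \<in> {..nat k}"
    hence e1: "nat (k - int i) = nat k - i" and e2: "nat (d - int i) = nat d - i" using k kd by auto
    show "(-1) ^ nat (k - int i) * int (nat (d - int i) choose nat (k - int i)) * h (int i) =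
      a * ((-1)^(nat k-i) * int ((nat d-i) choose (nat k-i)) * int i ^ 2)
       + b * ((-1)^(nat k-i) * int ((nat d-i) choose (nat k-i)))"
      unfolding e1 e2 hdef by (simp add: algebra_simps)
  qed
  also have "\<dots> = a * PP (nat k) (nat d) + b * QQ (nat k) (nat d)"
    by (simp add: PP_def QQ_def sum.distrib sum_distrib_left)
  finally show ?thesis .
qed

lemma pos1:
  assumes a: "a > 0" and b: "b > 0"
    and hdef: "\<And>j. h j = (if j \<ge> 0 then a * j ^ 2 + b else (0::int))"
    and c: "0 \<le> a" "a \<le> b"
  shows "\<forall>k\<le>1. 0 \<le> beta h k 1"
proof (intro allI impI)
  fix k :: int assume kD: "k \<le> 1"
  show "0 \<le> beta h k 1"
  proof (cases "k < 0")
    case True thus ?thesis using beta_neg[OF hdef] by simp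
  next
    case False
    hence e: "beta h k 1 = a * PP (nat k) 1 + b * QQ (nat k) 1"
      using beta_form[OF a b hdef, of k 1] kD by simp
    have "nat k \<le> 1" using kD by simp
    hence "nat k = 0 \<or> nat k = 1" by arith
    moreover have "0 \<le> a * PP 0 1 + b * QQ 0 1"
    proof -
      have "PP 0 1 = 0" "QQ 0 1 = 1" by code_simp+
      thus ?thesis using a b c by simp
    qed
    moreover have "0 \<le> a * PP 1 1 + b * QQ 1 1"
    proof -
      have "PP 1 1 = 1" "QQ 1 1 = 0" by code_simp+
      thus ?thesis using a b c by simp
    qed
    ultimately show ?thesis using e by auto
  qed
qed

lemma pos2:
  assumes a: "a > 0" and b: "b > 0"
    and hdef: "\<And>j. h j = (if j \<ge> 0 then a * j ^ 2 + b else (0::int))"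
    and c: "b \<le> a" "a \<le> 2*b"
  shows "\<forall>k\<le>2. 0 \<le> beta h k 2"
proof (intro allI impI)
  fix k :: int assume kD: "k \<le> 2"
  show "0 \<le> beta h k 2"
  proof (cases "k < 0")
    case True thus ?thesis using beta_neg[OF hdef] by simp
  next
    case False
    hence e: "beta h k 2 = a * PP (nat k) 2 + b * QQ (nat k) 2"
      using beta_form[OF a b hdef, of k 2] kD by simp
    have "nat k \<le> 2" using kD by simp
    hence "nat k = 0 \<or> nat k = 1 \<or> nat k = 2" by arith
    moreover have "0 \<le> a * PP 0 2 + b * QQ 0 2"
    proof -
      have "PP 0 2 = 0" "QQ 0 2 = 1" by code_simp+
      thus ?thesis using a b c by simp
    qed
    moreover have "0 \<le> a * PP 1 2 + b * QQ 1 2"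
    proof -
      have "PP 1 2 = 1" "QQ 1 2 = -1" by code_simp+
      thus ?thesis using a b c by simp
    qed
    moreover have "0 \<le> a * PP 2 2 + b * QQ 2 2"
    proof -
      have "PP 2 2 = 3" "QQ 2 2 = 1" by code_simp+
      thus ?thesis using a b c by simp
    qed
    ultimately show ?thesis using e by auto
  qed
qed

lemma pos3:
  assumes a: "a > 0" and b: "b > 0"
    and hdef: "\<And>j. h j = (if j \<ge> 0 then a * j ^ 2 + b else (0::int))"
    and c: "2*b \<le> a" "a \<le> 3*b"
  shows "\<forall>k\<le>3. 0 \<le> beta h k 3"
proof (intro allI impI)
  fix k :: int assume kD: "k \<le> 3"
  show "0 \<le> beta h k 3"
  proof (cases "k < 0")
    case True thus ?thesis using beta_neg[OF hdef] by simp
  next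
    case False
    hence e: "beta h k 3 = a * PP (nat k) 3 + b * QQ (nat k) 3"
      using beta_form[OF a b hdef, of k 3] kD by simp
    have "nat k \<le> 3" using kD by simp
    hence "nat k = 0 \<or> nat k = 1 \<or> nat k = 2 \<or> nat k = 3" by arith
    moreover have "0 \<le> a * PP 0 3 + b * QQ 0 3"
    proof -
      have "PP 0 3 = 0" "QQ 0 3 = 1" by code_simp+
      thus ?thesis using a b c by simp
    qed
    moreover have "0 \<le> a * PP 1 3 + b * QQ 1 3"
    proof -
      have "PP 1 3 = 1" "QQ 1 3 = -2" by code_simp+
      thus ?thesis using a b c by simp
    qed
    moreover have "0 \<le> a * PP 2 3 + b * QQ 2 3"
    proof -
      have "PP 2 3 = 2" "QQ 2 3 = 2" by code_simp+
      thus ?thesis using a b c by simp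
    qed
    moreover have "0 \<le> a * PP 3 3 + b * QQ 3 3"
    proof -
      have "PP 3 3 = 6" "QQ 3 3 = 0" by code_simp+
      thus ?thesis using a b c by simp
    qed
    ultimately show ?thesis using e by auto
  qed
qed

lemma pos4:
  assumes a: "a > 0" and b: "b > 0"
    and hdef: "\<And>j. h j = (if j \<ge> 0 then a * j ^ 2 + b else (0::int))"
    and c: "3*b \<le> a" "a \<le> 4*b"
  shows "\<forall>k\<le>4. 0 \<le> beta h k 4"
proof (intro allI impI)
  fix k :: int assume kD: "k \<le> 4"
  show "0 \<le> beta h k 4"
  proof (cases "k < 0")
    case True thus ?thesis using beta_neg[OF hdef] by simp
  next
    case False
    hence e: "beta h k 4 = a * PP (nat k) 4 + b * QQ (nat k) 4"
      using beta_form[OF a b hdef, of k 4] kD by simp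
    have "nat k \<le> 4" using kD by simp
    hence "nat k = 0 \<or> nat k = 1 \<or> nat k = 2 \<or> nat k = 3 \<or> nat k = 4" by arith
    moreover have "0 \<le> a * PP 0 4 + b * QQ 0 4"
    proof -
      have "PP 0 4 = 0" "QQ 0 4 = 1" by code_simp+
      thus ?thesis using a b c by simp
    qed
    moreover have "0 \<le> a * PP 1 4 + b * QQ 1 4"
    proof -
      have "PP 1 4 = 1" "QQ 1 4 = -3" by code_simp+
      thus ?thesis using a b c by simp
    qed
    moreover have "0 \<le> a * PP 2 4 + b * QQ 2 4"
    proof -
      have "PP 2 4 = 1" "QQ 2 4 = 4" by code_simp+
      thus ?thesis using a b c by simp
    qed
    moreover have "0 \<le> a * PP 3 4 + b * QQ 3 4"
    proof -
      have "PP 3 4 = 4" "QQ 3 4 = -2" by code_simp+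
      thus ?thesis using a b c by simp
    qed
    moreover have "0 \<le> a * PP 4 4 + b * QQ 4 4"
    proof -
      have "PP 4 4 = 10" "QQ 4 4 = 1" by code_simp+
      thus ?thesis using a b c by simp
    qed
    ultimately show ?thesis using e by auto
  qed
qed

lemma pos5:
  assumes a: "a > 0" and b: "b > 0"
    and hdef: "\<And>j. h j = (if j \<ge> 0 then a * j ^ 2 + b else (0::int))"
    and c: "4*b \<le> a"
  shows "\<forall>k\<le>5. 0 \<le> beta h k 5"
proof (intro allI impI)
  fix k :: int assume kD: "k \<le> 5"
  show "0 \<le> beta h k 5"
  proof (cases "k < 0")
    case True thus ?thesis using beta_neg[OF hdef] by simp
  next
    case False
    hence e: "beta h k 5 = a * PP (nat k) 5 + b * QQ (nat k) 5"
      using beta_form[OF a b hdef, of k 5] kD by simp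
    have "nat k \<le> 5" using kD by simp
    hence "nat k = 0 \<or> nat k = 1 \<or> nat k = 2 \<or> nat k = 3 \<or> nat k = 4 \<or> nat k = 5" by arith
    moreover have "0 \<le> a * PP 0 5 + b * QQ 0 5"
    proof -
      have "PP 0 5 = 0" "QQ 0 5 = 1" by code_simp+
      thus ?thesis using a b c by simp
    qed
    moreover have "0 \<le> a * PP 1 5 + b * QQ 1 5"
    proof -
      have "PP 1 5 = 1" "QQ 1 5 = -4" by code_simp+
      thus ?thesis using a b c by simp
    qed
    moreover have "0 \<le> a * PP 2 5 + b * QQ 2 5"
    proof -
      have "PP 2 5 = 0" "QQ 2 5 = 7" by code_simp+
      thus ?thesis using a b c by simp
    qed
    moreover have "0 \<le> a * PP 3 5 + b * QQ 3 5"
    proof -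
      have "PP 3 5 = 3" "QQ 3 5 = -6" by code_simp+
      thus ?thesis using a b c by simp
    qed
    moreover have "0 \<le> a * PP 4 5 + b * QQ 4 5"
    proof -
      have "PP 4 5 = 6" "QQ 4 5 = 3" by code_simp+
      thus ?thesis using a b c by simp
    qed
    moreover have "0 \<le> a * PP 5 5 + b * QQ 5 5"
    proof -
      have "PP 5 5 = 15" "QQ 5 5 = 0" by code_simp+
      thus ?thesis using a b c by simp
    qed
    ultimately show ?thesis using e by auto
  qed
qed

lemma pos6:
  assumes a: "a > 0" and b: "b > 0"
    and hdef: "\<And>j. h j = (if j \<ge> 0 then a * j ^ 2 + b else (0::int))"
    and c: "5*b \<le> a" "a \<le> 11*b"
  shows "\<forall>k\<le>6. 0 \<le> beta h k 6"
proof (intro allI impI)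
  fix k :: int assume kD: "k \<le> 6"
  show "0 \<le> beta h k 6"
  proof (cases "k < 0")
    case True thus ?thesis using beta_neg[OF hdef] by simp
  next
    case False
    hence e: "beta h k 6 = a * PP (nat k) 6 + b * QQ (nat k) 6"
      using beta_form[OF a b hdef, of k 6] kD by simp
    have "nat k \<le> 6" using kD by simp
    hence "nat k = 0 \<or> nat k = 1 \<or> nat k = 2 \<or> nat k = 3 \<or> nat k = 4 \<or> nat k = 5 \<or> nat k = 6" by arith
    moreover have "0 \<le> a * PP 0 6 + b * QQ 0 6"
    proof -
      have "PP 0 6 = 0" "QQ 0 6 = 1" by code_simp+
      thus ?thesis using a b c by simp
    qed
    moreover have "0 \<le> a * PP 1 6 + b * QQ 1 6"
    proof -
      have "PP 1 6 = 1" "QQ 1 6 = -5" by code_simp+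
      thus ?thesis using a b c by simp
    qed
    moreover have "0 \<le> a * PP 2 6 + b * QQ 2 6"
    proof -
      have "PP 2 6 = -1" "QQ 2 6 = 11" by code_simp+
      thus ?thesis using a b c by simp
    qed
    moreover have "0 \<le> a * PP 3 6 + b * QQ 3 6"
    proof -
      have "PP 3 6 = 3" "QQ 3 6 = -13" by code_simp+
      thus ?thesis using a b c by simp
    qed
    moreover have "0 \<le> a * PP 4 6 + b * QQ 4 6"
    proof -
      have "PP 4 6 = 3" "QQ 4 6 = 9" by code_simp+
      thus ?thesis using a b c by simp
    qed
    moreover have "0 \<le> a * PP 5 6 + b * QQ 5 6"
    proof -
      have "PP 5 6 = 9" "QQ 5 6 = -3" by code_simp+
      thus ?thesis using a b c by simp
    qed
    moreover have "0 \<le> a * PP 6 6 + b * QQ 6 6"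
    proof -
      have "PP 6 6 = 21" "QQ 6 6 = 1" by code_simp+
      thus ?thesis using a b c by simp
    qed
    ultimately show ?thesis using e by auto
  qed
qed

lemma pos7:
  assumes a: "a > 0" and b: "b > 0"
    and hdef: "\<And>j. h j = (if j \<ge> 0 then a * j ^ 2 + b else (0::int))"
    and c: "6*b \<le> a" "a \<le> 8*b"
  shows "\<forall>k\<le>7. 0 \<le> beta h k 7"
proof (intro allI impI)
  fix k :: int assume kD: "k \<le> 7"
  show "0 \<le> beta h k 7"
  proof (cases "k < 0")
    case True thus ?thesis using beta_neg[OF hdef] by simp
  next
    case False
    hence e: "beta h k 7 = a * PP (nat k) 7 + b * QQ (nat k) 7"
      using beta_form[OF a b hdef, of k 7] kD by simp
    have "nat k \<le> 7" using kD by simp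
    hence "nat k = 0 \<or> nat k = 1 \<or> nat k = 2 \<or> nat k = 3 \<or> nat k = 4 \<or> nat k = 5 \<or> nat k = 6 \<or> nat k = 7" by arith
    moreover have "0 \<le> a * PP 0 7 + b * QQ 0 7"
    proof -
      have "PP 0 7 = 0" "QQ 0 7 = 1" by code_simp+
      thus ?thesis using a b c by simp
    qed
    moreover have "0 \<le> a * PP 1 7 + b * QQ 1 7"
    proof -
      have "PP 1 7 = 1" "QQ 1 7 = -6" by code_simp+
      thus ?thesis using a b c by simp
    qed
    moreover have "0 \<le> a * PP 2 7 + b * QQ 2 7"
    proof -
      have "PP 2 7 = -2" "QQ 2 7 = 16" by code_simp+
      thus ?thesis using a b c by simp
    qed
    moreover have "0 \<le> a * PP 3 7 + b * QQ 3 7"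
    proof -
      have "PP 3 7 = 4" "QQ 3 7 = -24" by code_simp+
      thus ?thesis using a b c by simp
    qed
    moreover have "0 \<le> a * PP 4 7 + b * QQ 4 7"
    proof -
      have "PP 4 7 = 0" "QQ 4 7 = 22" by code_simp+
      thus ?thesis using a b c by simp
    qed
    moreover have "0 \<le> a * PP 5 7 + b * QQ 5 7"
    proof -
      have "PP 5 7 = 6" "QQ 5 7 = -12" by code_simp+
      thus ?thesis using a b c by simp
    qed
    moreover have "0 \<le> a * PP 6 7 + b * QQ 6 7"
    proof -
      have "PP 6 7 = 12" "QQ 6 7 = 4" by code_simp+
      thus ?thesis using a b c by simp
    qed
    moreover have "0 \<le> a * PP 7 7 + b * QQ 7 7"
    proof -
      have "PP 7 7 = 28" "QQ 7 7 = 0" by code_simp+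
      thus ?thesis using a b c by simp
    qed
    ultimately show ?thesis using e by auto
  qed
qed

lemma pos8:
  assumes a: "a > 0" and b: "b > 0"
    and hdef: "\<And>j. h j = (if j \<ge> 0 then a * j ^ 2 + b else (0::int))"
    and c: "7*b \<le> a" "3*a \<le> 22*b"
  shows "\<forall>k\<le>8. 0 \<le> beta h k 8"
proof (intro allI impI)
  fix k :: int assume kD: "k \<le> 8"
  show "0 \<le> beta h k 8"
  proof (cases "k < 0")
    case True thus ?thesis using beta_neg[OF hdef] by simp
  next
    case False
    hence e: "beta h k 8 = a * PP (nat k) 8 + b * QQ (nat k) 8"
      using beta_form[OF a b hdef, of k 8] kD by simp
    have "nat k \<le> 8" using kD by simp
    hence "nat k = 0 \<or> nat k = 1 \<or> nat k = 2 \<or> nat k = 3 \<or> nat k = 4 \<or> nat k = 5 \<or> nat k = 6 \<or> nat k = 7 \<or> nat k = 8" by arith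
    moreover have "0 \<le> a * PP 0 8 + b * QQ 0 8"
    proof -
      have "PP 0 8 = 0" "QQ 0 8 = 1" by code_simp+
      thus ?thesis using a b c by simp
    qed
    moreover have "0 \<le> a * PP 1 8 + b * QQ 1 8"
    proof -
      have "PP 1 8 = 1" "QQ 1 8 = -7" by code_simp+
      thus ?thesis using a b c by simp
    qed
    moreover have "0 \<le> a * PP 2 8 + b * QQ 2 8"
    proof -
      have "PP 2 8 = -3" "QQ 2 8 = 22" by code_simp+
      thus ?thesis using a b c by simp
    qed
    moreover have "0 \<le> a * PP 3 8 + b * QQ 3 8"
    proof -
      have "PP 3 8 = 6" "QQ 3 8 = -40" by code_simp+
      thus ?thesis using a b c by simp
    qed
    moreover have "0 \<le> a * PP 4 8 + b * QQ 4 8"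
    proof -
      have "PP 4 8 = -4" "QQ 4 8 = 46" by code_simp+
      thus ?thesis using a b c by simp
    qed
    moreover have "0 \<le> a * PP 5 8 + b * QQ 5 8"
    proof -
      have "PP 5 8 = 6" "QQ 5 8 = -34" by code_simp+
      thus ?thesis using a b c by simp
    qed
    moreover have "0 \<le> a * PP 6 8 + b * QQ 6 8"
    proof -
      have "PP 6 8 = 6" "QQ 6 8 = 16" by code_simp+
      thus ?thesis using a b c by simp
    qed
    moreover have "0 \<le> a * PP 7 8 + b * QQ 7 8"
    proof -
      have "PP 7 8 = 16" "QQ 7 8 = -4" by code_simp+
      thus ?thesis using a b c by simp
    qed
    moreover have "0 \<le> a * PP 8 8 + b * QQ 8 8"
    proof -
      have "PP 8 8 = 36" "QQ 8 8 = 1" by code_simp+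
      thus ?thesis using a b c by simp
    qed
    ultimately show ?thesis using e by auto
  qed
qed
lemma PP1: "PP 1 n = 1" by (simp add: PP_def)
lemma QQ1: "QQ 1 n = 1 - int n" by (simp add: QQ_def)
lemma PP2: "n \<ge> 2 \<Longrightarrow> PP 2 n = 5 - int n"
  by (simp add: PP_def numeral_2_eq_2 atMost_Suc of_nat_diff)
lemma QQ2: "n \<ge> 2 \<Longrightarrow> 2 * QQ 2 n = int n ^ 2 - 3 * int n + 4"
proof -
  assume n: "n \<ge> 2"
  have c: "2 * int (n choose 2) = int n * (int n - 1)"
  proof -
    have ev: "even (n * (n - 1))" by (cases "even n") auto
    have "2 * (n choose 2) = n * (n - 1)" using ev by (simp add: choose_two)
    hence "int (2 * (n choose 2)) = int (n * (n - 1))" by simp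
    thus ?thesis using n by (simp add: of_nat_diff)
  qed
  have "QQ 2 n = int (n choose 2) - int (n - 1) + 1"
    by (simp add: QQ_def numeral_2_eq_2 atMost_Suc)
  thus ?thesis using c n by (simp add: of_nat_diff algebra_simps power2_eq_square)
qed

lemma fail1:
  assumes a: "a > 0" and b: "b > 0"
    and hdef: "\<And>j. h j = (if j \<ge> 0 then a * j ^ 2 + b else (0::int))"
    and d: "d \<ge> 1" and c: "a < b * (d - 1)"
  shows "\<not> (\<forall>k\<le>d. 0 \<le> beta h k d)"
proof -
  have "beta h 1 d = a * PP 1 (nat d) + b * QQ 1 (nat d)"
    using beta_form[OF a b hdef, of 1 d] d by simp
  also have "\<dots> = a + b * (1 - d)"
  proof -
    have "PP 1 (nat d) = 1" "QQ 1 (nat d) = 1 - d" using d by (simp_all only: PP1 QQ1)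
    thus ?thesis by simp
  qed
  finally have "beta h 1 d < 0" using c by (simp add: algebra_simps)
  thus ?thesis using d by force
qed

lemma fail2:
  assumes a: "a > 0" and b: "b > 0"
    and hdef: "\<And>j. h j = (if j \<ge> 0 then a * j ^ 2 + b else (0::int))"
    and d: "d \<ge> 2" and c: "b * (d^2 - 3*d + 4) < 2 * a * (d - 5)"
  shows "\<not> (\<forall>k\<le>d. 0 \<le> beta h k d)"
proof -
  have n: "nat d \<ge> 2" and nd: "int (nat d) = d" using d by auto
  have "2 * beta h 2 d = 2 * (a * PP 2 (nat d) + b * QQ 2 (nat d))"
    using beta_form[OF a b hdef, of 2 d] d by simp
  also have "\<dots> = 2 * a * PP 2 (nat d) + b * (2 * QQ 2 (nat d))" by (simp add: algebra_simps)
  also have "\<dots> = 2 * a * (5 - d) + b * (d^2 - 3*d + 4)" using n nd by (simp add: PP2 QQ2)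
  finally have "2 * beta h 2 d < 0" using c by (simp add: algebra_simps)
  hence "beta h 2 d < 0" by simp
  thus ?thesis using d by force
qed

lemma failbig:
  assumes a: "a > 0" and b: "b > 0"
    and hdef: "\<And>j. h j = (if j \<ge> 0 then a * j ^ 2 + b else (0::int))"
    and d: "d \<ge> 7" and c: "a > 8 * b"
  shows "\<not> (\<forall>k\<le>d. 0 \<le> beta h k d)"
proof (cases "a < b * (d - 1)")
  case True thus ?thesis using fail1[OF a b hdef] d by simp
next
  case False
  hence "0 \<le> a + b - b * d" by (simp add: algebra_simps)
  hence t1: "0 \<le> (d - 7) * (a + b - b * d)" using d by simp
  have "(a - 5 * b) * 4 \<le> (a - 5 * b) * (d - 3)"
    by (rule mult_left_mono) (use c d b in auto)
  moreover have "(a - 5 * b) * 4 = 4 * a - 20 * b" by simp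
  ultimately have t2: "(a - 5 * b) * (d - 3) > 12 * b" using c by linarith
  have id: "2 * a * (d - 5) - b * (d^2 - 3*d + 4) = (d - 7) * (a + b - b * d) + (a - 5 * b) * (d - 3) - 12 * b"
    by (simp add: algebra_simps power2_eq_square)
  have "b * (d^2 - 3*d + 4) < 2 * a * (d - 5)" using id t1 t2 by linarith
  thus ?thesis using fail2[OF a b hdef] d by simp
qed

lemma hdepth_eq:
  assumes "\<forall>k\<le>D. 0 \<le> beta h k D" and "\<And>d. d > D \<Longrightarrow> \<not> (\<forall>k\<le>d. 0 \<le> beta h k d)"
  shows "hdepth h = D"
  unfolding hdepth_def
  by (rule Greatest_equality) (use assms in \<open>auto simp: not_less[symmetric]\<close>)

theorem theorem3p10:
  fixes a b :: int and h :: "int \<Rightarrow> int" and \<alpha> :: real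
  assumes "a > 0" and "b > 0"
    and "\<And>j. h j = (if j \<ge> 0 then a * j ^ 2 + b else 0)"
    and "\<alpha> = real_of_int a / real_of_int b"
  shows "hdepth h =
    (if \<alpha> < 7 then \<lfloor>\<alpha>\<rfloor> + 1
     else if \<alpha> \<le> 22 / 3 then 8
     else if \<alpha> \<le> 8 then 7
     else if \<alpha> \<le> 11 then 6
     else 5)"
proof -
  note a = assms(1) and b = assms(2) and hdef = assms(3)
  have bR: "real_of_int b > 0" using b by simp
  have A7: "\<alpha> < 7 \<longleftrightarrow> a < 7 * b"
  proof -
    have "\<alpha> < 7 \<longleftrightarrow> real_of_int a < 7 * real_of_int b"
      using bR by (simp add: assms(4) pos_divide_less_eq pos_divide_le_eq)
    also have "\<dots> \<longleftrightarrow> a < 7 * b" by linarith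
    finally show ?thesis .
  qed

  have A223: "\<alpha> \<le> 22 / 3 \<longleftrightarrow> 3 * a \<le> 22 * b"
  proof -
    have "\<alpha> \<le> 22 / 3 \<longleftrightarrow> real_of_int a \<le> 22 / 3 * real_of_int b"
      using bR by (simp add: assms(4) pos_divide_le_eq)
    also have "\<dots> \<longleftrightarrow> 3 * a \<le> 22 * b" by linarith
    finally show ?thesis .
  qed
  have A8: "\<alpha> \<le> 8 \<longleftrightarrow> a \<le> 8 * b"
  proof -
    have "\<alpha> \<le> 8 \<longleftrightarrow> real_of_int a \<le> 8 * real_of_int b"
      using bR by (simp add: assms(4) pos_divide_less_eq pos_divide_le_eq)
    also have "\<dots> \<longleftrightarrow> a \<le> 8 * b" by linarith
    finally show ?thesis .
  qed

  have A11: "\<alpha> \<le> 11 \<longleftrightarrow> a \<le> 11 * b"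
  proof -
    have "\<alpha> \<le> 11 \<longleftrightarrow> real_of_int a \<le> 11 * real_of_int b"
      using bR by (simp add: assms(4) pos_divide_less_eq pos_divide_le_eq)
    also have "\<dots> \<longleftrightarrow> a \<le> 11 * b" by linarith
    finally show ?thesis .
  qed

  have fl: "\<lfloor>\<alpha>\<rfloor> = a div b" using assms(4) by (simp add: floor_divide_of_int_eq)
  show ?thesis
  proof (cases "a < 7 * b")
    case True
    define q where "q = a div b"
    have dm: "b * q + a mod b = a" unfolding q_def by (rule mult_div_mod_eq)
    have m1: "0 \<le> a mod b" "a mod b < b" using b by simp_all
    have qb: "b * q \<le> a" "a < b * (q + 1)" using dm m1 by (simp_all add: algebra_simps)
    have q0: "q \<ge> 0" unfolding q_def using a b by (simp add: pos_imp_zdiv_nonneg_iff)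
    have q6: "q \<le> 6"
    proof (rule ccontr)
      assume "\<not> q \<le> 6"
      hence "b * 7 \<le> b * q" using b by (intro mult_left_mono) auto
      thus False using qb True by linarith
    qed
    have lhs: "hdepth h = q + 1"
    proof (rule hdepth_eq)
      fix d assume "d > q + 1"
      hence "b * (q + 1) \<le> b * (d - 1)" using b by (intro mult_left_mono) auto
      hence "a < b * (d - 1)" using qb by linarith
      thus "\<not> (\<forall>k\<le>d. 0 \<le> beta h k d)" using fail1[OF a b hdef, of d] q0 \<open>d > q + 1\<close> by simp
    next
      have "q = 0 \<or> q = 1 \<or> q = 2 \<or> q = 3 \<or> q = 4 \<or> q = 5 \<or> q = 6" using q0 q6 by linarith
      thus "\<forall>k\<le>q + 1. 0 \<le> beta h k (q + 1)"
      proof (elim disjE)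
        assume "q = 0" thus ?thesis using pos1[OF a b hdef] qb by simp
      next
        assume "q = 1" thus ?thesis using pos2[OF a b hdef] qb by simp
      next
        assume "q = 2" thus ?thesis using pos3[OF a b hdef] qb by (simp add: algebra_simps)
      next
        assume "q = 3" thus ?thesis using pos4[OF a b hdef] qb by (simp add: algebra_simps)
      next
        assume "q = 4" thus ?thesis using pos5[OF a b hdef] qb by (simp add: algebra_simps)
      next
        assume "q = 5" thus ?thesis using pos6[OF a b hdef] qb by (simp add: algebra_simps)
      next
        assume "q = 6" thus ?thesis using pos7[OF a b hdef] qb by (simp add: algebra_simps)
      qed
    qed
    show ?thesis using True A7 fl lhs q_def by simp
  next
    case F7: False
    show ?thesis
    proof (cases "3 * a \<le> 22 * b")
      case True
      have "hdepth h = 8"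
      proof (rule hdepth_eq)
        show "\<forall>k\<le>8. 0 \<le> beta h k 8" using pos8[OF a b hdef] F7 True by simp
      next
        fix d :: int assume "d > 8"
        hence "b * 8 \<le> b * (d - 1)" using b by (intro mult_left_mono) auto
        hence "a < b * (d - 1)" using True b by linarith
        thus "\<not> (\<forall>k\<le>d. 0 \<le> beta h k d)" using fail1[OF a b hdef, of d] \<open>d > 8\<close> by simp
      qed
      thus ?thesis using F7 True A7 A223 by simp
    next
      case F22: False
      show ?thesis
      proof (cases "a \<le> 8 * b")
        case True
        have "hdepth h = 7"
        proof (rule hdepth_eq)
          show "\<forall>k\<le>7. 0 \<le> beta h k 7" using pos7[OF a b hdef] F22 True by simp
        next
          fix d :: int assume d7: "d > 7"
          show "\<not> (\<forall>k\<le>d. 0 \<le> beta h k d)"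
          proof -
            consider "d = 8" | "d = 9" | "d \<ge> 10" using d7 by linarith
            thus ?thesis
            proof cases
              case 1 thus ?thesis using fail2[OF a b hdef, of 8] F22 by simp
            next
              case 2
              have "29 * b < 4 * a" using F22 b by linarith
              thus ?thesis using fail2[OF a b hdef, of 9] 2 by simp
            next
              case 3
              hence "b * 9 \<le> b * (d - 1)" using b by (intro mult_left_mono) auto
              hence "a < b * (d - 1)" using True b by linarith
              thus ?thesis using fail1[OF a b hdef, of d] 3 by simp
            qed
          qed
        qed
        thus ?thesis using F7 F22 True A7 A223 A8 by simp
      next
        case F8: False
        show ?thesis
        proof (cases "a \<le> 11 * b")
          case True
          have "hdepth h = 6"
          proof (rule hdepth_eq)
            show "\<forall>k\<le>6. 0 \<le> beta h k 6" using pos6[OF a b hdef] F8 True by simp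
          next
            fix d :: int assume "d > 6"
            thus "\<not> (\<forall>k\<le>d. 0 \<le> beta h k d)" using failbig[OF a b hdef, of d] F8 by simp
          qed
          thus ?thesis using F7 F22 F8 True A7 A223 A8 A11 by simp
        next
          case F11: False
          have "hdepth h = 5"
          proof (rule hdepth_eq)
            show "\<forall>k\<le>5. 0 \<le> beta h k 5" using pos5[OF a b hdef] F8 b by (simp add: not_le)
          next
            fix d :: int assume d5: "d > 5"
            show "\<not> (\<forall>k\<le>d. 0 \<le> beta h k d)"
            proof (cases "d = 6")
              case True thus ?thesis using fail2[OF a b hdef, of 6] F11 by simp
            next
              case False thus ?thesis using failbig[OF a b hdef, of d] F8 d5 by simp
            qed
          qed
          thus ?thesis using F7 F22 F8 F11 A7 A223 A8 A11 by simp
        qed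
      qed
    qed
  qed
qed

end
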